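(* Let $X_1,\dots,X_k$ be real random variables defined on a common probability space. If for all $a_1,\dots,a_k\in\mathbb{R}_+$ the linear combination $a_1X_1+\dots+a_kX_k$ is a centered Gaussian random variable, then $(X_1,\dots,X_k)$ is a centered Gaussian random vector. *)

theory Defs
  imports "HOL-Probability.Probability"
begin

definition centered_gaussian_rv :: "'a measure \<Rightarrow> ('a \<Rightarrow> real) \<Rightarrow> bool" where
  "centered_gaussian_rv M X \<longleftrightarrow>
     X \<in> borel_measurable M \<and>
     ((AE \<omega> in M. X \<omega> = 0) \<or>
      (\<exists>\<sigma>>0. distributed M lborel X (\<lambda>x. ennreal (normal_density 0 \<sigma> x))))"

definition centered_gaussian_vector :: "'a measure \<Rightarrow> nat \<Rightarrow> (nat \<Rightarrow> 'a \<Rightarrow> real) \<Rightarrow> bool" where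
  "centered_gaussian_vector M k X \<longleftrightarrow>
     (\<forall>i<k. X i \<in> borel_measurable M) \<and>
     (\<forall>a :: nat \<Rightarrow> real. centered_gaussian_rv M (\<lambda>\<omega>. \<Sum>i<k. a i * X i \<omega>))"

end

theory Submission imports Defs "HOL-Complex_Analysis.Complex_Analysis" begin

lemma exp_bound_aux:
  fixes c x s :: real assumes "s > 0"
  shows "c * abs x \<le> c\<^sup>2 * s\<^sup>2 + x\<^sup>2 / (4 * s\<^sup>2)"
proof -
  have "0 \<le> (abs c * s - abs x / (2 * s)) * (abs c * s - abs x / (2 * s))" by simp
  also have "\<dots> = c\<^sup>2 * s\<^sup>2 + x\<^sup>2 / (4 * s\<^sup>2) - abs c * abs x"
    using assms by (simp add: power2_eq_square field_simps)
  finally have "abs c * abs x \<le> c\<^sup>2 * s\<^sup>2 + x\<^sup>2 / (4 * s\<^sup>2)" by simp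
  moreover have "c * abs x \<le> abs c * abs x" by (simp add: mult_right_mono)
  ultimately show ?thesis by linarith
qed

lemma normal_exp_bound:
  fixes c x s :: real assumes "s > 0"
  shows "normal_density 0 s x * exp (c * abs x) \<le> exp (c\<^sup>2 * s\<^sup>2) * sqrt 2 * normal_density 0 (sqrt 2 * s) x"
proof -
  have ex: "- (x\<^sup>2) / (2 * s\<^sup>2) + c * abs x \<le> c\<^sup>2 * s\<^sup>2 + (- (x\<^sup>2) / (4 * s\<^sup>2))"
  proof -
    have "- (x\<^sup>2) / (2 * s\<^sup>2) = - (x\<^sup>2) / (4 * s\<^sup>2) - x\<^sup>2 / (4 * s\<^sup>2)"
      using assms by (simp add: field_simps)
    then show ?thesis using exp_bound_aux[OF assms, of c x] by linarith
  qed
  have e: "exp (- (x\<^sup>2) / (2 * s\<^sup>2)) * exp (c * abs x) \<le> exp (c\<^sup>2 * s\<^sup>2) * exp (- (x\<^sup>2) / (4 * s\<^sup>2))"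
    unfolding exp_add[symmetric] using ex by simp
  have k: "sqrt 2 * (1 / sqrt (2 * pi * (sqrt 2 * s)\<^sup>2)) = 1 / sqrt (2 * pi * s\<^sup>2)"
    using assms by (simp add: real_sqrt_mult field_simps power2_eq_square)
  have "normal_density 0 s x * exp (c * abs x) = 1 / sqrt (2 * pi * s\<^sup>2) * (exp (- (x\<^sup>2) / (2 * s\<^sup>2)) * exp (c * abs x))"
    unfolding normal_density_def by simp
  also have "\<dots> \<le> 1 / sqrt (2 * pi * s\<^sup>2) * (exp (c\<^sup>2 * s\<^sup>2) * exp (- (x\<^sup>2) / (4 * s\<^sup>2)))"
    by (rule mult_left_mono[OF e]) simp
  also have "\<dots> = exp (c\<^sup>2 * s\<^sup>2) * (sqrt 2 * (1 / sqrt (2 * pi * (sqrt 2 * s)\<^sup>2))) * exp (- (x\<^sup>2) / (4 * s\<^sup>2))"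
    unfolding k by simp
  also have "\<dots> = exp (c\<^sup>2 * s\<^sup>2) * sqrt 2 * normal_density 0 (sqrt 2 * s) x"
    unfolding normal_density_def by (simp add: power_mult_distrib)
  finally show ?thesis .
qed

lemma cg_exp_integrable:
  assumes P: "prob_space M" and G: "centered_gaussian_rv M Y"
  shows "integrable M (\<lambda>\<omega>. exp (c * abs (Y \<omega>)))"
proof -
  interpret prob_space M by (rule P)
  have Ym[measurable]: "Y \<in> borel_measurable M" using G unfolding centered_gaussian_rv_def by blast
  from G consider "AE \<omega> in M. Y \<omega> = 0" | \<sigma> where "\<sigma> > 0" "distributed M lborel Y (\<lambda>x. ennreal (normal_density 0 \<sigma> x))"
    unfolding centered_gaussian_rv_def by blast
  then show ?thesis
  proof cases
    case 1
    have ae: "AE \<omega> in M. 1 = exp (c * abs (Y \<omega>))" using 1 by eventually_elim simp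
    show ?thesis
      apply (rule integrable_cong_AE_imp[where g="\<lambda>\<omega>. 1"])
        apply simp
       apply measurable
      by (rule ae)
  next
    case 2
    have "integrable lborel (\<lambda>x. normal_density 0 \<sigma> x * exp (c * abs x))"
    proof (rule Bochner_Integration.integrable_bound)
      show "integrable lborel (\<lambda>x. exp (c\<^sup>2 * \<sigma>\<^sup>2) * sqrt 2 * normal_density 0 (sqrt 2 * \<sigma>) x)"
        using 2(1) by (intro integrable_mult_right integrable_normal_density) simp
      show "AE x in lborel. norm (normal_density 0 \<sigma> x * exp (c * abs x)) \<le>
              norm (exp (c\<^sup>2 * \<sigma>\<^sup>2) * sqrt 2 * normal_density 0 (sqrt 2 * \<sigma>) x)"
        using normal_exp_bound[OF 2(1)] by (simp add: abs_mult)
    qed simp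
    then show ?thesis
      using distributed_integrable[OF 2(2), of "\<lambda>x. exp (c * abs x)"] by simp
  qed
qed

lemma cg_square_integrable:
  assumes P: "prob_space M" and G: "centered_gaussian_rv M Y"
  shows "integrable M (\<lambda>\<omega>. (Y \<omega>)\<^sup>2)"
proof (rule Bochner_Integration.integrable_bound[OF cg_exp_integrable[OF P G, of 2]])
  have [measurable]: "Y \<in> borel_measurable M" using G unfolding centered_gaussian_rv_def by simp
  show "(\<lambda>\<omega>. (Y \<omega>)\<^sup>2) \<in> borel_measurable M" by measurable
  have "(Y \<omega>)\<^sup>2 \<le> exp (2 * abs (Y \<omega>))" for \<omega>
  proof -
    have "(Y \<omega>)\<^sup>2 = (abs (Y \<omega>))\<^sup>2" by simp
    also have "\<dots> \<le> (1 + abs (Y \<omega>))\<^sup>2" by (rule power_mono) simp_all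
    also have "\<dots> \<le> (exp (abs (Y \<omega>)))\<^sup>2"
      by (rule power_mono) (use exp_ge_add_one_self[of "abs (Y \<omega>)"] in linarith, simp)
    also have "\<dots> = exp (2 * abs (Y \<omega>))" by (metis exp_double)
    finally show ?thesis .
  qed
  then show "AE \<omega> in M. norm ((Y \<omega>)\<^sup>2) \<le> norm (exp (2 * abs (Y \<omega>)))" by simp
qed

lemma cg_char:
  assumes P: "prob_space M" and G: "centered_gaussian_rv M Y"
  shows "(CLINT \<omega>|M. iexp (t * Y \<omega>)) = complex_of_real (exp (- (t\<^sup>2 * (LINT \<omega>|M. (Y \<omega>)\<^sup>2)) / 2))"
proof -
  interpret prob_space M by (rule P)
  have Ym[measurable]: "Y \<in> borel_measurable M" using G unfolding centered_gaussian_rv_def by blast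
  from G consider "AE \<omega> in M. Y \<omega> = 0" | \<sigma> where "\<sigma> > 0" "distributed M lborel Y (\<lambda>x. ennreal (normal_density 0 \<sigma> x))"
    unfolding centered_gaussian_rv_def by blast
  then show ?thesis
  proof cases
    case 1
    have "(CLINT \<omega>|M. iexp (t * Y \<omega>)) = (CLINT \<omega>|M. 1)"
      apply (rule integral_cong_AE)
        apply measurable
      using 1 by eventually_elim simp
    also have "\<dots> = 1" using prob_space by simp
    finally have a: "(CLINT \<omega>|M. iexp (t * Y \<omega>)) = 1" .
    have "(LINT \<omega>|M. (Y \<omega>)\<^sup>2) = (LINT \<omega>|M. 0)"
      apply (rule integral_cong_AE)
        apply measurable
      using 1 by eventually_elim simp
    then have b: "(LINT \<omega>|M. (Y \<omega>)\<^sup>2) = 0" by simp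
    show ?thesis unfolding a b by simp
  next
    case 2
    define Z where "Z = (\<lambda>\<omega>. Y \<omega> / \<sigma>)"
    have Zm[measurable]: "Z \<in> borel_measurable M" unfolding Z_def by measurable
    have DZ: "distributed M lborel Z (\<lambda>x. ennreal (std_normal_density x))"
      using normal_standard_normal_convert[OF 2(1), of Y 0] 2(2) unfolding Z_def by simp
    have dist: "distr M lborel Z = std_normal_distribution"
      using DZ unfolding distributed_def by simp
    have "(CLINT \<omega>|M. iexp (t * Y \<omega>)) = (CLINT \<omega>|M. iexp ((t * \<sigma>) * Z \<omega>))"
    proof -
      have eq: "\<And>\<omega>. t * \<sigma> * (Y \<omega> / \<sigma>) = t * Y \<omega>" using 2(1) by (simp add: field_simps)
      show ?thesis unfolding Z_def eq ..
    qed
    also have "\<dots> = (CLINT x|distr M lborel Z. iexp ((t * \<sigma>) * x))"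
      by (rule integral_distr[symmetric]) measurable
    also have "\<dots> = char std_normal_distribution (t * \<sigma>)"
      unfolding char_def dist by simp
    also have "\<dots> = complex_of_real (exp (- ((t * \<sigma>)\<^sup>2) / 2))"
      by (simp add: char_std_normal_distribution)
    finally have a: "(CLINT \<omega>|M. iexp (t * Y \<omega>)) = complex_of_real (exp (- ((t * \<sigma>)\<^sup>2) / 2))" .
    have "(LINT \<omega>|M. (Y \<omega>)\<^sup>2) = (LINT x|lborel. normal_density 0 \<sigma> x * x\<^sup>2)"
      using distributed_integral[OF 2(2), of "\<lambda>x. x\<^sup>2"] by simp
    also have "\<dots> = \<sigma>\<^sup>2"
    proof -
      have "(LBINT x. normal_density 0 \<sigma> x * (x - 0) ^ (2 * 1)) = fact (2 * 1) / ((2 / \<sigma>\<^sup>2) ^ 1 * fact 1)"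
        using 2(1) by (rule integral_normal_moment_even)
      moreover have "fact (2 * 1) = (2::real)" by (simp add: numeral_2_eq_2)
      ultimately show ?thesis using 2(1) by simp
    qed
    finally have b: "(LINT \<omega>|M. (Y \<omega>)\<^sup>2) = \<sigma>\<^sup>2" .
    show ?thesis unfolding a b by (simp add: power_mult_distrib)
  qed
qed

lemma char_to_cg:
  assumes P: "prob_space M" and Ym[measurable]: "Y \<in> borel_measurable M" and v: "v \<ge> 0"
    and C: "\<And>t. (CLINT \<omega>|M. iexp (t * Y \<omega>)) = complex_of_real (exp (- (t\<^sup>2 * v) / 2))"
  shows "centered_gaussian_rv M Y"
proof -
  interpret prob_space M by (rule P)
  define N where "N = distr M borel Y"
  have RN: "real_distribution N" unfolding N_def by simp
  have charN: "char N t = complex_of_real (exp (- (t\<^sup>2 * v) / 2))" for t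
  proof -
    have "char N t = (CLINT \<omega>|M. iexp (t * Y \<omega>))"
      unfolding char_def N_def by (rule integral_distr) measurable
    then show ?thesis using C by simp
  qed
  show ?thesis
  proof (cases "v = 0")
    case True
    define R where "R = return borel (0::real)"
    have RR: "real_distribution R" unfolding R_def real_distribution_def real_distribution_axioms_def
      by (simp add: prob_space_return)
    have "char R t = 1" for t unfolding R_def char_def
      by (subst integral_return) simp_all
    then have "char N = char R" using charN True by (simp add: fun_eq_iff)
    then have NR: "N = R" by (rule Levy_uniqueness[OF RN RR])
    have "AE x in N. x = 0" unfolding NR R_def by (subst AE_return) simp_all
    then have "AE \<omega> in M. Y \<omega> = 0" unfolding N_def by (subst (asm) AE_distr_iff) simp_all
    then show ?thesis unfolding centered_gaussian_rv_def by simp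
  next
    case False
    define \<sigma> where "\<sigma> = sqrt v"
    have s: "\<sigma> > 0" using v False unfolding \<sigma>_def by simp
    have s2: "\<sigma>\<^sup>2 = v" using v unfolding \<sigma>_def by simp
    interpret S: prob_space std_normal_distribution by (rule prob_space_normal_density) simp
    have DS: "distributed std_normal_distribution lborel (\<lambda>x. x) (\<lambda>x. ennreal (std_normal_density x))"
      unfolding distributed_def by (simp add: distr_id2)
    have DS2: "distributed std_normal_distribution lborel (\<lambda>x. 0 + \<sigma> * x) (\<lambda>x. ennreal (normal_density (0 + \<sigma> * 0) (\<bar>\<sigma>\<bar> * 1) x))"
      using S.normal_density_affine[OF DS, of \<sigma> 0] s by simp
    define N' where "N' = density lborel (\<lambda>x. ennreal (normal_density 0 \<sigma> x))"
    have N'eq: "N' = distr std_normal_distribution lborel (\<lambda>x. \<sigma> * x)"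
      using DS2 s unfolding distributed_def N'_def by simp
    have RN': "real_distribution N'" unfolding N'_def real_distribution_def real_distribution_axioms_def
      using s by (simp add: prob_space_normal_density)
    have "char N' t = complex_of_real (exp (- (t\<^sup>2 * v) / 2))" for t
    proof -
      have "char N' t = (CLINT x|std_normal_distribution. iexp (t * (\<sigma> * x)))"
        unfolding char_def N'eq by (rule integral_distr) measurable
      also have "\<dots> = char std_normal_distribution (t * \<sigma>)"
        unfolding char_def by (simp add: mult.assoc)
      also have "\<dots> = complex_of_real (exp (- (t\<^sup>2 * v) / 2))"
        by (simp add: char_std_normal_distribution power_mult_distrib s2)
      finally show ?thesis .
    qed
    then have "char N = char N'" using charN by (simp add: fun_eq_iff)
    then have NN': "N = N'" by (rule Levy_uniqueness[OF RN RN'])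
    have "distr M lborel Y = N" unfolding N_def by (rule distr_cong) simp_all
    then have "distributed M lborel Y (\<lambda>x. ennreal (normal_density 0 \<sigma> x))"
      unfolding distributed_def NN' N'_def by simp
    then show ?thesis unfolding centered_gaussian_rv_def using s by auto
  qed
qed

lemma partial_exp_le:
  fixes x :: real assumes "0 \<le> x" "finite I"
  shows "(\<Sum>n\<in>I. x^n / fact n) \<le> exp x"
proof -
  have s: "(\<lambda>n. x^n / fact n) sums exp x"
    using exp_converges[of x] by (simp add: divide_inverse_commute)
  show ?thesis
    using sum_le_suminf[OF sums_summable[OF s] assms(2), of ] sums_unique[OF s] assms(1) by simp
qed

lemma H_sums:
  fixes U V :: "'a \<Rightarrow> real" and t :: real and w :: complex
  assumes P: "prob_space M" and Um[measurable]: "U \<in> borel_measurable M" and Vm[measurable]: "V \<in> borel_measurable M"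
    and IE: "\<And>c. integrable M (\<lambda>\<omega>. exp (c * abs (V \<omega>)))"
  shows "(\<lambda>n. (CLINT \<omega>|M. exp (\<i> * of_real t * of_real (U \<omega>)) * (\<i> * of_real t * of_real (V \<omega>))^n / fact n) * w^n)
           sums (CLINT \<omega>|M. exp (\<i> * of_real t * (of_real (U \<omega>) + w * of_real (V \<omega>))))"
proof -
  interpret prob_space M by (rule P)
  define a where "a \<omega> = \<i> * of_real t * of_real (V \<omega>) * w" for \<omega>
  define e where "e \<omega> = exp (\<i> * of_real t * of_real (U \<omega>))" for \<omega>
  define f where "f n \<omega> = e \<omega> * (\<i> * of_real t * of_real (V \<omega>))^n / fact n" for n \<omega>
  define s where "s N \<omega> = (\<Sum>n<N. f n \<omega> * w^n)" for N \<omega>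
  define B where "B \<omega> = exp ((abs t * cmod w) * abs (V \<omega>))" for \<omega>
  have [measurable]: "a \<in> borel_measurable M" "e \<in> borel_measurable M" "\<And>n. f n \<in> borel_measurable M"
    "\<And>N. s N \<in> borel_measurable M" "B \<in> borel_measurable M"
    unfolding a_def e_def f_def s_def B_def by measurable
  have intB: "integrable M B" unfolding B_def by (rule IE)
  have ne: "norm (e \<omega>) = 1" for \<omega>
    unfolding e_def by (metis mult.assoc norm_exp_i_times of_real_mult)
  have na: "norm (a \<omega>) = abs t * cmod w * abs (V \<omega>)" for \<omega>
    unfolding a_def by (simp add: norm_mult)
  have fw: "f n \<omega> * w^n = e \<omega> * ((a \<omega>)^n / fact n)" for n \<omega>
    unfolding f_def a_def by (simp add: power_mult_distrib)
  have s_eq: "s N \<omega> = e \<omega> * (\<Sum>n<N. (a \<omega>)^n / fact n)" for N \<omega>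
    unfolding s_def fw by (simp add: sum_distrib_left)
  have bnd_sum: "norm (\<Sum>n\<in>I. (a \<omega>)^n / fact n) \<le> B \<omega>" if "finite I" for I \<omega>
  proof -
    have "norm (\<Sum>n\<in>I. (a \<omega>)^n / fact n) \<le> (\<Sum>n\<in>I. norm ((a \<omega>)^n / fact n))" by (rule norm_sum)
    also have "\<dots> = (\<Sum>n\<in>I. (norm (a \<omega>))^n / fact n)" by (simp add: norm_divide norm_power)
    also have "\<dots> \<le> exp (norm (a \<omega>))" by (rule partial_exp_le[OF _ that]) simp
    finally show ?thesis unfolding B_def na by (simp add: mult.assoc)
  qed
  have bnd: "norm (s N \<omega>) \<le> B \<omega>" for N \<omega>
    unfolding s_eq norm_mult ne using bnd_sum[of "{..<N}" \<omega>] by simp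
  have lim: "(\<lambda>N. s N \<omega>) \<longlonglongrightarrow> exp (\<i> * of_real t * (of_real (U \<omega>) + w * of_real (V \<omega>)))" for \<omega>
  proof -
    have "(\<lambda>n. (a \<omega>)^n / fact n) sums exp (a \<omega>)"
      using exp_converges[of "a \<omega>"] by (simp add: scaleR_conv_of_real divide_inverse_commute)
    then have "(\<lambda>N. \<Sum>n<N. (a \<omega>)^n / fact n) \<longlonglongrightarrow> exp (a \<omega>)" unfolding sums_def .
    then have "(\<lambda>N. s N \<omega>) \<longlonglongrightarrow> e \<omega> * exp (a \<omega>)" unfolding s_eq by (rule tendsto_mult_left)
    moreover have "e \<omega> * exp (a \<omega>) = exp (\<i> * of_real t * (of_real (U \<omega>) + w * of_real (V \<omega>)))"
      unfolding e_def a_def exp_add[symmetric] by (simp add: algebra_simps)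
    ultimately show ?thesis by simp
  qed
  have intS: "integrable M (s N)" for N
    by (rule integrable_dominated_convergence2[where w=B and f="\<lambda>\<omega>. exp (\<i> * of_real t * (of_real (U \<omega>) + w * of_real (V \<omega>)))"])
       (use intB lim bnd in auto)
  have limI: "(\<lambda>N. integral\<^sup>L M (s N)) \<longlonglongrightarrow> (CLINT \<omega>|M. exp (\<i> * of_real t * (of_real (U \<omega>) + w * of_real (V \<omega>))))"
    by (rule integral_dominated_convergence[where w=B]) (use intB lim bnd in auto)
  have intf: "integrable M (\<lambda>\<omega>. f n \<omega> * w^n)" for n
  proof (rule Bochner_Integration.integrable_bound[OF intB])
    show "AE \<omega> in M. norm (f n \<omega> * w ^ n) \<le> norm (B \<omega>)"
    proof (intro AE_I2)
      fix \<omega>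
      have "norm (f n \<omega> * w ^ n) = norm (\<Sum>k\<in>{n}. (a \<omega>)^k / fact k)" unfolding fw norm_mult ne by simp
      also have "\<dots> \<le> B \<omega>" by (rule bnd_sum) simp
      finally show "norm (f n \<omega> * w ^ n) \<le> norm (B \<omega>)" unfolding B_def by simp
    qed
  qed measurable
  have "integral\<^sup>L M (s N) = (\<Sum>n<N. (CLINT \<omega>|M. f n \<omega>) * w^n)" for N
  proof -
    have "integral\<^sup>L M (\<lambda>\<omega>. \<Sum>n<N. f n \<omega> * w^n) = (\<Sum>n<N. integral\<^sup>L M (\<lambda>\<omega>. f n \<omega> * w^n))"
      by (rule Bochner_Integration.integral_sum) (rule intf)
    then show ?thesis unfolding s_def by simp
  qed
  with limI show ?thesis unfolding sums_def f_def e_def by simp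
qed

lemma H_holo:
  fixes U V :: "'a \<Rightarrow> real" and t :: real
  assumes P: "prob_space M" and Um[measurable]: "U \<in> borel_measurable M" and Vm[measurable]: "V \<in> borel_measurable M"
    and IE: "\<And>c. integrable M (\<lambda>\<omega>. exp (c * abs (V \<omega>)))"
  shows "(\<lambda>w. CLINT \<omega>|M. exp (\<i> * of_real t * (of_real (U \<omega>) + w * of_real (V \<omega>)))) holomorphic_on UNIV"
proof -
  define c where "c n = (CLINT \<omega>|M. exp (\<i> * of_real t * of_real (U \<omega>)) * (\<i> * of_real t * of_real (V \<omega>))^n / fact n)" for n
  have S: "(\<lambda>n. c n * w^n) sums (CLINT \<omega>|M. exp (\<i> * of_real t * (of_real (U \<omega>) + w * of_real (V \<omega>))))" for w
    unfolding c_def by (rule H_sums[OF P Um Vm IE])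
  have eq: "(\<lambda>w. CLINT \<omega>|M. exp (\<i> * of_real t * (of_real (U \<omega>) + w * of_real (V \<omega>)))) = (\<lambda>w. \<Sum>n. c n * w^n)"
    using S by (simp add: fun_eq_iff sums_unique)
  have "\<And>y. summable (\<lambda>n. c n * y ^ n)" using S sums_summable by blast
  from termdiffs_strong_converges_everywhere[OF this]
  show ?thesis unfolding eq by (auto simp: holomorphic_on_open)
qed

lemma lp: "1 islimpt (of_real ` {0..} :: complex set)"
  unfolding islimpt_approachable
proof (intro allI impI)
  fix e :: real assume e: "e > 0"
  define x where "x = (of_real (1 + e / 2) :: complex)"
  have 1: "x \<in> of_real ` {0..}" unfolding x_def
    using e by (intro imageI) simp
  have "dist x 1 = dist x (of_real 1)" by simp
  also have "\<dots> = dist (1 + e / 2) 1" unfolding x_def by (rule dist_of_real)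
  also have "\<dots> = e / 2" using e by (simp add: dist_real_def)
  finally have d: "dist x 1 = e / 2" .
  have 2: "dist x 1 < e" using e d by simp
  have 3: "x \<noteq> 1" using e d by auto
  show "\<exists>x'\<in>(of_real ` {0..} :: complex set). x' \<noteq> 1 \<and> dist x' 1 < e"
    using 1 2 3 by blast
qed

lemma core:
  fixes U V :: "'a \<Rightarrow> real"
  assumes P: "prob_space M" and Um[measurable]: "U \<in> borel_measurable M" and Vm[measurable]: "V \<in> borel_measurable M"
    and GV: "centered_gaussian_rv M V"
    and G: "\<And>z::real. z \<ge> 0 \<Longrightarrow> centered_gaussian_rv M (\<lambda>\<omega>. U \<omega> + z * V \<omega>)"
  shows "centered_gaussian_rv M (\<lambda>\<omega>. U \<omega> - V \<omega>)"
proof -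
  interpret prob_space M by (rule P)
  have GU: "centered_gaussian_rv M U" using G[of 0] by simp
  have IE: "\<And>c. integrable M (\<lambda>\<omega>. exp (c * abs (V \<omega>)))" by (rule cg_exp_integrable[OF P GV])
  have iU: "integrable M (\<lambda>\<omega>. (U \<omega>)\<^sup>2)" by (rule cg_square_integrable[OF P GU])
  have iV: "integrable M (\<lambda>\<omega>. (V \<omega>)\<^sup>2)" by (rule cg_square_integrable[OF P GV])
  have iUV: "integrable M (\<lambda>\<omega>. U \<omega> * V \<omega>)"
  proof (rule Bochner_Integration.integrable_bound[OF Bochner_Integration.integrable_add[OF iU iV]])
    show "AE \<omega> in M. norm (U \<omega> * V \<omega>) \<le> norm ((U \<omega>)\<^sup>2 + (V \<omega>)\<^sup>2)"
    proof (intro AE_I2)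
      fix \<omega>
      have h: "0 \<le> (abs (U \<omega>) - abs (V \<omega>)) * (abs (U \<omega>) - abs (V \<omega>))" by simp
      have h2: "(abs (U \<omega>) - abs (V \<omega>)) * (abs (U \<omega>) - abs (V \<omega>)) = (U \<omega>)\<^sup>2 + (V \<omega>)\<^sup>2 - 2 * (abs (U \<omega>) * abs (V \<omega>))"
        by (simp add: power2_eq_square algebra_simps abs_mult_self_eq)
      have h3: "0 \<le> abs (U \<omega>) * abs (V \<omega>)" by simp
      have "abs (U \<omega> * V \<omega>) \<le> (U \<omega>)\<^sup>2 + (V \<omega>)\<^sup>2"
        using h h2 h3 unfolding abs_mult by linarith
      then show "norm (U \<omega> * V \<omega>) \<le> norm ((U \<omega>)\<^sup>2 + (V \<omega>)\<^sup>2)" by simp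
    qed
  qed measurable
  define A where "A = (LINT \<omega>|M. (U \<omega>)\<^sup>2)"
  define B where "B = (LINT \<omega>|M. U \<omega> * V \<omega>)"
  define C where "C = (LINT \<omega>|M. (V \<omega>)\<^sup>2)"
  have q: "(LINT \<omega>|M. (U \<omega> + z * V \<omega>)\<^sup>2) = A + 2 * z * B + z\<^sup>2 * C" for z
  proof -
    have "(LINT \<omega>|M. (U \<omega> + z * V \<omega>)\<^sup>2) = (LINT \<omega>|M. (U \<omega>)\<^sup>2 + (2 * z) * (U \<omega> * V \<omega>) + z\<^sup>2 * (V \<omega>)\<^sup>2)"
      by (simp add: power2_eq_square algebra_simps)
    also have "\<dots> = A + 2 * z * B + z\<^sup>2 * C"
      unfolding A_def B_def C_def using iU iV iUV by simp
    finally show ?thesis .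
  qed
  define H where "H (t::real) (w::complex) = (CLINT \<omega>|M. exp (\<i> * of_real t * (of_real (U \<omega>) + w * of_real (V \<omega>))))" for t w
  define R where "R (t::real) (w::complex) = exp (of_real (- (t\<^sup>2) / 2) * (of_real A + 2 * w * of_real B + w\<^sup>2 * of_real C))" for t w
  have HR: "H t (of_real z) = R t (of_real z)" if "z \<ge> 0" for t z
  proof -
    have "H t (of_real z) = (CLINT \<omega>|M. iexp (t * (U \<omega> + z * V \<omega>)))"
      unfolding H_def by (simp add: algebra_simps)
    also have "\<dots> = complex_of_real (exp (- (t\<^sup>2 * (LINT \<omega>|M. (U \<omega> + z * V \<omega>)\<^sup>2)) / 2))"
      by (rule cg_char[OF P G[OF that]])
    also have "\<dots> = R t (of_real z)"
    proof -
      have "- (t\<^sup>2 * (A + 2 * z * B + z\<^sup>2 * C)) / 2 = (- (t\<^sup>2) / 2) * (A + 2 * z * B + z\<^sup>2 * C)" by simp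
      then show ?thesis unfolding q R_def exp_of_real[symmetric] by simp
    qed
    finally show ?thesis .
  qed
  have Hm1: "H t (-1) = R t (-1)" for t
  proof -
    have hol: "(\<lambda>w. H t w - R t w) holomorphic_on UNIV"
      unfolding H_def R_def
      by (intro holomorphic_intros H_holo[OF P Um Vm IE])
    have "H t (-1) - R t (-1) = 0"
      by (rule analytic_continuation[OF hol open_UNIV connected_UNIV _ _ lp]) (auto simp: HR)
    then show ?thesis by simp
  qed
  define v where "v = (LINT \<omega>|M. (U \<omega> - V \<omega>)\<^sup>2)"
  have v: "v = A - 2 * B + C" unfolding v_def using q[of "-1"] by simp
  show ?thesis
  proof (rule char_to_cg[OF P _ _])
    show "(\<lambda>\<omega>. U \<omega> - V \<omega>) \<in> borel_measurable M" by measurable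
    show "0 \<le> v" unfolding v_def by simp
    fix t
    have "(CLINT \<omega>|M. iexp (t * (U \<omega> - V \<omega>))) = H t (-1)"
      unfolding H_def by (simp add: algebra_simps)
    also have "\<dots> = R t (-1)" by (rule Hm1)
    also have "\<dots> = complex_of_real (exp (- (t\<^sup>2 * v) / 2))"
    proof -
      have "- (t\<^sup>2 * (A - 2 * B + C)) / 2 = (- (t\<^sup>2) / 2) * (A + 2 * (-1) * B + (-1)\<^sup>2 * C)" by simp
      then show ?thesis unfolding R_def v exp_of_real[symmetric] by simp
    qed
    finally show "(CLINT \<omega>|M. iexp (t * (U \<omega> - V \<omega>))) = complex_of_real (exp (- (t\<^sup>2 * v) / 2))" .
  qed
qed

theorem lemmaA1:
  fixes M :: "'a measure" and k :: nat and X :: "nat \<Rightarrow> 'a \<Rightarrow> real"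
  assumes "prob_space M"
    and "\<And>i. i < k \<Longrightarrow> X i \<in> borel_measurable M"
    and "\<And>a :: nat \<Rightarrow> real. (\<forall>i<k. a i \<ge> 0) \<Longrightarrow>
           centered_gaussian_rv M (\<lambda>\<omega>. \<Sum>i<k. a i * X i \<omega>)"
  shows "centered_gaussian_vector M k X"
proof -
  have meas: "(\<lambda>\<omega>. \<Sum>i<k. b i * X i \<omega>) \<in> borel_measurable M" for b
    by (rule borel_measurable_sum) (use assms(2) in auto)
  have "centered_gaussian_rv M (\<lambda>\<omega>. \<Sum>i<k. a i * X i \<omega>)" for a
  proof -
    define ap where "ap i = max (a i) 0" for i
    define am where "am i = max (- a i) 0" for i
    define U where "U \<omega> = (\<Sum>i<k. ap i * X i \<omega>)" for \<omega>
    define V where "V \<omega> = (\<Sum>i<k. am i * X i \<omega>)" for \<omega>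
    have Um: "U \<in> borel_measurable M" unfolding U_def by (rule meas)
    have Vm: "V \<in> borel_measurable M" unfolding V_def by (rule meas)
    have GV: "centered_gaussian_rv M V" unfolding V_def by (rule assms(3)) (simp add: am_def)
    have G: "centered_gaussian_rv M (\<lambda>\<omega>. U \<omega> + z * V \<omega>)" if z: "z \<ge> 0" for z
    proof -
      have "(\<lambda>\<omega>. U \<omega> + z * V \<omega>) = (\<lambda>\<omega>. \<Sum>i<k. (ap i + z * am i) * X i \<omega>)"
        unfolding U_def V_def by (simp add: sum_distrib_left sum.distrib[symmetric] algebra_simps)
      moreover have "centered_gaussian_rv M (\<lambda>\<omega>. \<Sum>i<k. (ap i + z * am i) * X i \<omega>)"
        by (rule assms(3)) (use z in \<open>simp add: ap_def am_def\<close>)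
      ultimately show ?thesis by simp
    qed
    have "(\<lambda>\<omega>. U \<omega> - V \<omega>) = (\<lambda>\<omega>. \<Sum>i<k. a i * X i \<omega>)"
    proof -
      have "ap i - am i = a i" for i unfolding ap_def am_def by auto
      then show ?thesis unfolding U_def V_def by (simp add: sum_subtractf[symmetric] left_diff_distrib[symmetric])
    qed
    with core[OF assms(1) Um Vm GV G] show ?thesis by simp
  qed
  then show ?thesis unfolding centered_gaussian_vector_def using assms(2) by blast
qed

end
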